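(* Let $\gamma:[0,1]\to[0,1]^2$ be a continuous curve with $\gamma(0)=(0,0)$, $\gamma(1)=(1,1)$, and $\pi_2\circ\gamma\in\mathcal U$. Then for each $n\in\mathbb{N}$ there exist points $A_1,\ldots,A_{n+1}$ on $\gamma$ such that, setting $A_0=(0,0)$, $A_{n+2}=(1,1)$ and $A_{-1}=A_{n+1}-(1,1)$, $$\pi_2(\overrightarrow{A_iA_{i+1}})=\pi_1(\overrightarrow{A_{i-1}A_i}),\qquad i=0,\ldots,n+1.$$ Moreover, if $\gamma(t)\in\Delta$ for all $t\in(0,1)$, then the points $A_i$ can be chosen to be distinct.
   Context: $\pi_1(a,b)=a$ and $\pi_2(a,b)=b$ are the coordinate projections; $\overrightarrow{AB}=B-A$. $\Delta=\{(a,b)\in(0,1)^2: a>b\}$. A function $f:[0,1]\to\mathbb{R}$ is called piecewise monotone if there is a partition of $[0,1]$ into finitely many subintervals on each of which $f$ is strictly increasing or strictly decreasing. $\mathcal U$ denotes the set of piecewise monotone continuous functions $f:[0,1]\to[0,1]$ with the property that, for every $c\in[0,1]$, the set $f^{-1}(c)$ does not contain both a local maximum point and a local minimum point of $f$. *)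

theory Defs
  imports "HOL-Analysis.Analysis"
begin

definition piecewise_monotone :: "(real \<Rightarrow> real) \<Rightarrow> bool" where
  "piecewise_monotone f \<longleftrightarrow>
     (\<exists>(k::nat) (x::nat \<Rightarrow> real). x 0 = 0 \<and> x k = 1 \<and> (\<forall>i<k. x i < x (Suc i)) \<and>
        (\<forall>i<k. monotone_on {x i..x (Suc i)} (<) (<) f \<or>
               monotone_on {x i..x (Suc i)} (<) (>) f))"

definition local_max_point :: "(real \<Rightarrow> real) \<Rightarrow> real \<Rightarrow> bool" where
  "local_max_point f x \<longleftrightarrow> x \<in> {0..1} \<and>
     (\<exists>e>0. \<forall>y\<in>{0..1}. \<bar>y - x\<bar> < e \<longrightarrow> f y \<le> f x)"

definition local_min_point :: "(real \<Rightarrow> real) \<Rightarrow> real \<Rightarrow> bool" where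
  "local_min_point f x \<longleftrightarrow> x \<in> {0..1} \<and>
     (\<exists>e>0. \<forall>y\<in>{0..1}. \<bar>y - x\<bar> < e \<longrightarrow> f x \<le> f y)"

definition classU :: "(real \<Rightarrow> real) set" where
  "classU = {f. piecewise_monotone f \<and> continuous_on {0..1} f \<and> f ` {0..1} \<subseteq> {0..1} \<and>
     (\<forall>c. \<not> ((\<exists>x. x \<in> {0..1} \<and> f x = c \<and> local_max_point f x) \<and>
             (\<exists>y. y \<in> {0..1} \<and> f y = c \<and> local_min_point f y)))}"

definition Delta :: "(real \<times> real) set" where
  "Delta = {(a, b). 0 < a \<and> a < 1 \<and> 0 < b \<and> b < 1 \<and> a > b}"

end

theory Submission
  imports Defs
begin

lemma bolzano_fin:
  fixes X :: "nat \<Rightarrow> nat \<Rightarrow> real"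
  assumes "\<forall>j i. i < m \<longrightarrow> X j i \<in> {0..1}"
  shows "\<exists>r l. strict_mono r \<and> (\<forall>i<m. l i \<in> {0..1} \<and> (\<lambda>j. X (r j) i) \<longlonglongrightarrow> l i)"
  using assms
proof (induction m)
  case 0
  show ?case by (rule exI[of _ id]) (auto simp: strict_mono_def)
next
  case (Suc m)
  then obtain r l where r: "strict_mono r" and l: "\<forall>i<m. l i \<in> {0..1} \<and> (\<lambda>j. X (r j) i) \<longlonglongrightarrow> l i"
    by auto
  have "\<forall>j. X (r j) m \<in> {0..1}" using Suc.prems by auto
  then obtain a r' where a: "a \<in> {0..1}" "strict_mono r'" "((\<lambda>j. X (r j) m) \<circ> r') \<longlonglongrightarrow> a"
    using compact_imp_seq_compact[OF compact_Icc[of 0 1]] unfolding seq_compact_def by metis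
  show ?case
  proof (intro exI conjI allI impI)
    show "strict_mono (r \<circ> r')" using r a(2) by (rule strict_mono_o)
    fix i assume i: "i < Suc m"
    show "(l(m := a)) i \<in> {0..1}" using l a i by (auto simp: less_Suc_eq)
    show "(\<lambda>j. X ((r \<circ> r') j) i) \<longlonglongrightarrow> (l(m := a)) i"
    proof (cases "i = m")
      case True then show ?thesis using a(3) by (simp add: o_def)
    next
      case False
      then have "i < m" using i by auto
      then have "((\<lambda>j. X (r j) i) \<circ> r') \<longlonglongrightarrow> l i"
        using l LIMSEQ_subseq_LIMSEQ a(2) by blast
      then show ?thesis using False by (simp add: o_def)
    qed
  qed
qed

lemma pm_approx:
  fixes F :: "nat \<Rightarrow> (nat \<Rightarrow> real) \<Rightarrow> real" and m :: nat and C
  defines "C \<equiv> {x::nat\<Rightarrow>real. \<forall>j<m. 0 \<le> x j \<and> x j \<le> 1}"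
  assumes modulus: "\<And>e. e > 0 \<Longrightarrow> \<exists>d>0. \<forall>x\<in>C. \<forall>y\<in>C. (\<forall>j<m. \<bar>x j - y j\<bar> < d) \<longrightarrow> (\<forall>i<m. \<bar>F i x - F i y\<bar> < e)"
    and lo: "\<And>x i. x \<in> C \<Longrightarrow> i < m \<Longrightarrow> x i = 0 \<Longrightarrow> F i x \<le> 0"
    and hi: "\<And>x i. x \<in> C \<Longrightarrow> i < m \<Longrightarrow> x i = 1 \<Longrightarrow> F i x \<ge> 0"
    and e: "e > 0"
  shows "\<exists>x\<in>C. \<forall>i<m. \<bar>F i x\<bar> < e"
proof -
  obtain d where d: "d > 0" and md: "\<forall>x\<in>C. \<forall>y\<in>C. (\<forall>j<m. \<bar>x j - y j\<bar> < d) \<longrightarrow> (\<forall>i<m. \<bar>F i x - F i y\<bar> < e)"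
    using modulus[OF e] by blast
  obtain k :: nat where k: "inverse (real (Suc k)) < d" using reals_Archimedean[OF d] by blast
  define p where "p = Suc k"
  have p0: "p > 0" and pd: "1 / real p < d" using k by (auto simp: p_def field_simps)
  define emb where "emb y = (\<lambda>j. real (y j) / real p)" for y :: "nat \<Rightarrow> nat"
  have embC: "emb y \<in> C" if "\<forall>j<m. y j \<le> p" for y
    using that p0 by (auto simp: C_def emb_def)
  define label where "label y i = (if y i = 0 then 0 else if y i = p then 1 else if F i (emb y) < 0 then 0 else (1::nat))"
    for y i
  have label_le: "label y i \<le> 1" for y i by (simp add: label_def)
  have lab0: "F i (emb y) \<le> 0" if "\<forall>j<m. y j \<le> p" "i < m" "label y i = 0" for y i
  proof (cases "y i = 0")
    case True
    then have "emb y i = 0" by (simp add: emb_def)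
    then show ?thesis using lo[OF embC[OF that(1)] that(2)] by simp
  next
    case False
    then show ?thesis using that(3) p0 by (auto simp: label_def split: if_splits)
  qed
  have lab1: "F i (emb y) \<ge> 0" if "\<forall>j<m. y j \<le> p" "i < m" "label y i \<noteq> 0" for y i
  proof (cases "y i = p")
    case True
    then have "emb y i = 1" using p0 by (simp add: emb_def)
    then show ?thesis using hi[OF embC[OF that(1)] that(2)] by simp
  next
    case False
    then show ?thesis using that(3) p0 by (auto simp: label_def split: if_splits)
  qed
  obtain q where q1: "\<forall>i<m. q i < p"
    and q2: "\<forall>i<m. \<exists>r s. (\<forall>j<m. q j \<le> r j \<and> r j \<le> q j + 1) \<and> (\<forall>j<m. q j \<le> s j \<and> s j \<le> q j + 1) \<and> label r i \<noteq> label s i"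
    by (rule kuhn_lemma[OF p0, of m label]) (use p0 in \<open>auto simp: label_def\<close>)
  have qC: "emb q \<in> C" using q1 embC by (simp add: less_imp_le)
  have close: "\<forall>j<m. \<bar>emb q j - emb r j\<bar> < d" if "\<forall>j<m. q j \<le> r j \<and> r j \<le> q j + 1" for r
  proof (intro allI impI)
    fix j assume "j < m"
    then have "\<bar>real (q j) - real (r j)\<bar> \<le> 1" using that by auto
    then have "\<bar>emb q j - emb r j\<bar> \<le> 1 / real p"
      using p0 by (simp add: emb_def diff_divide_distrib[symmetric] abs_divide divide_right_mono)
    then show "\<bar>emb q j - emb r j\<bar> < d" using pd by linarith
  qed
  show ?thesis
  proof (intro bexI[OF _ qC] allI impI)
    fix i assume i: "i < m"
    obtain r s where r: "\<forall>j<m. q j \<le> r j \<and> r j \<le> q j + 1" and s: "\<forall>j<m. q j \<le> s j \<and> s j \<le> q j + 1"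
      and rs: "label r i \<noteq> label s i" using q2 i by blast
    have rp: "\<forall>j<m. r j \<le> p" using r q1 by (metis Suc_eq_plus1 Suc_leI order_trans)
    have sp: "\<forall>j<m. s j \<le> p" using s q1 by (metis Suc_eq_plus1 Suc_leI order_trans)
    have Fr: "\<bar>F i (emb q) - F i (emb r)\<bar> < e" using md qC embC[OF rp] close[OF r] i by blast
    have Fs: "\<bar>F i (emb q) - F i (emb s)\<bar> < e" using md qC embC[OF sp] close[OF s] i by blast
    have "label r i = 0 \<and> label s i \<noteq> 0 \<or> label s i = 0 \<and> label r i \<noteq> 0"
      using rs label_le[of r i] label_le[of s i] by linarith
    then show "\<bar>F i (emb q)\<bar> < e"
    proof (elim disjE conjE)
      assume "label r i = 0" "label s i \<noteq> 0"
      then have "F i (emb r) \<le> 0" "F i (emb s) \<ge> 0" using lab0[OF rp i] lab1[OF sp i] by auto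
      then show ?thesis using Fr Fs by (simp add: abs_less_iff abs_diff_less_iff)
    next
      assume "label s i = 0" "label r i \<noteq> 0"
      then have "F i (emb s) \<le> 0" "F i (emb r) \<ge> 0" using lab0[OF sp i] lab1[OF rp i] by auto
      then show ?thesis using Fr Fs by (simp add: abs_less_iff abs_diff_less_iff)
    qed
  qed
qed

lemma poincare_miranda:
  fixes F :: "nat \<Rightarrow> (nat \<Rightarrow> real) \<Rightarrow> real" and m :: nat and C
  defines "C \<equiv> {x::nat\<Rightarrow>real. \<forall>j<m. 0 \<le> x j \<and> x j \<le> 1}"
  assumes modulus: "\<And>e. e > 0 \<Longrightarrow> \<exists>d>0. \<forall>x\<in>C. \<forall>y\<in>C. (\<forall>j<m. \<bar>x j - y j\<bar> < d) \<longrightarrow> (\<forall>i<m. \<bar>F i x - F i y\<bar> < e)"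
    and lo: "\<And>x i. x \<in> C \<Longrightarrow> i < m \<Longrightarrow> x i = 0 \<Longrightarrow> F i x \<le> 0"
    and hi: "\<And>x i. x \<in> C \<Longrightarrow> i < m \<Longrightarrow> x i = 1 \<Longrightarrow> F i x \<ge> 0"
  shows "\<exists>x\<in>C. \<forall>i<m. F i x = 0"
proof -
  have ap: "\<exists>x\<in>C. \<forall>i<m. \<bar>F i x\<bar> < inverse (real (Suc j))" for j
    unfolding C_def
    apply (rule pm_approx[where F=F and m=m and e="inverse (real (Suc j))"])
       apply (rule modulus[unfolded C_def], assumption)
      apply (rule lo[unfolded C_def], assumption+)
     apply (rule hi[unfolded C_def], assumption+)
    apply simp
    done
  have "\<forall>j. \<exists>x. x \<in> C \<and> (\<forall>i<m. \<bar>F i x\<bar> < inverse (real (Suc j)))" using ap by blast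
  then obtain X where X0: "\<forall>j. X j \<in> C \<and> (\<forall>i<m. \<bar>F i (X j)\<bar> < inverse (real (Suc j)))"
    by (auto simp: choice_iff)
  have X: "\<And>j. X j \<in> C" "\<And>j i. i < m \<Longrightarrow> \<bar>F i (X j)\<bar> < inverse (real (Suc j))"
    using X0 by auto
  have "\<forall>j i. i < m \<longrightarrow> X j i \<in> {0..1}" using X(1) by (auto simp: C_def)
  then obtain r l where r: "strict_mono r" and l: "\<forall>i<m. l i \<in> {0..1} \<and> (\<lambda>j. X (r j) i) \<longlonglongrightarrow> l i"
    using bolzano_fin by blast
  have lC: "l \<in> C" using l by (auto simp: C_def)
  show ?thesis
  proof (rule bexI[OF _ lC], intro allI impI, rule ccontr)
    fix i assume i: "i < m" and ne: "F i l \<noteq> 0"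
    define a where "a = \<bar>F i l\<bar>"
    have a: "a > 0" using ne by (simp add: a_def)
    obtain d where d: "d > 0" and md: "\<forall>x\<in>C. \<forall>y\<in>C. (\<forall>j<m. \<bar>x j - y j\<bar> < d) \<longrightarrow> (\<forall>i<m. \<bar>F i x - F i y\<bar> < a/2)"
      using modulus[of "a/2"] a by (meson half_gt_zero)
    have "\<forall>j\<in>{..<m}. eventually (\<lambda>k. \<bar>X (r k) j - l j\<bar> < d) sequentially"
    proof
      fix j assume "j \<in> {..<m}"
      then have "(\<lambda>k. X (r k) j) \<longlonglongrightarrow> l j" using l by auto
      then show "eventually (\<lambda>k. \<bar>X (r k) j - l j\<bar> < d) sequentially"
        using d unfolding tendsto_iff dist_real_def by blast
    qed
    then have "eventually (\<lambda>k. \<forall>j\<in>{..<m}. \<bar>X (r k) j - l j\<bar> < d) sequentially"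
      by (rule eventually_ball_finite[rotated]) auto
    then obtain N where N: "\<And>k. k \<ge> N \<Longrightarrow> \<forall>j\<in>{..<m}. \<bar>X (r k) j - l j\<bar> < d"
      by (auto simp: eventually_sequentially)
    obtain N2 :: nat where N2: "inverse (real (Suc N2)) < a/2" using reals_Archimedean[of "a/2"] a by auto
    define k where "k = max N N2"
    have "r k \<ge> k" using r by (rule seq_suble)
    then have "real (Suc N2) \<le> real (Suc (r k))" by (simp add: k_def)
    then have "inverse (real (Suc (r k))) \<le> inverse (real (Suc N2))"
      by (rule le_imp_inverse_le) simp
    then have "\<bar>F i (X (r k))\<bar> < a/2" using X(2)[OF i, of "r k"] N2 by linarith
    moreover have "\<bar>F i (X (r k)) - F i l\<bar> < a/2"
    proof -
      have "\<forall>j<m. \<bar>X (r k) j - l j\<bar> < d" using N[of k] by (simp add: k_def)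
      then show ?thesis
        using md X(1)[of "r k"] lC i by blast
    qed
    ultimately show False unfolding a_def by linarith
  qed
qed

definition tt :: "nat \<Rightarrow> (nat \<Rightarrow> real) \<Rightarrow> nat \<Rightarrow> real" where
  "tt n x k = (if k = 0 then 0 else if k \<le> Suc n then x (k - 1) else 1)"

theorem proposition2:
  fixes \<gamma> :: "real \<Rightarrow> real \<times> real" and n :: nat
  assumes "continuous_on {0..1} \<gamma>"
    and "\<gamma> ` {0..1} \<subseteq> {0..1} \<times> {0..1}"
    and "\<gamma> 0 = (0, 0)" and "\<gamma> 1 = (1, 1)"
    and "snd \<circ> \<gamma> \<in> classU"
  shows "(\<exists>A :: int \<Rightarrow> real \<times> real.
            A 0 = (0, 0) \<and> A (int n + 2) = (1, 1) \<and> A (-1) = A (int n + 1) - (1, 1) \<and>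
            (\<forall>i\<in>{1..int n + 1}. A i \<in> \<gamma> ` {0..1}) \<and>
            (\<forall>i\<in>{0..int n + 1}. snd (A (i + 1) - A i) = fst (A i - A (i - 1))))
       \<and> ((\<forall>t\<in>{0<..<1}. \<gamma> t \<in> Delta) \<longrightarrow>
          (\<exists>A :: int \<Rightarrow> real \<times> real.
            A 0 = (0, 0) \<and> A (int n + 2) = (1, 1) \<and> A (-1) = A (int n + 1) - (1, 1) \<and>
            (\<forall>i\<in>{1..int n + 1}. A i \<in> \<gamma> ` {0..1}) \<and>
            (\<forall>i\<in>{0..int n + 1}. snd (A (i + 1) - A i) = fst (A i - A (i - 1))) \<and>
            inj_on A {0..int n + 2}))"
proof -
  define f where "f s = snd (\<gamma> s)" for s
  define g where "g s = fst (\<gamma> s)" for s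
  have fg01: "0 \<le> f s \<and> f s \<le> 1 \<and> 0 \<le> g s \<and> g s \<le> 1" if "s \<in> {0..1}" for s
  proof -
    have "\<gamma> s \<in> {0..1} \<times> {0..1}" using assms(2) that by blast
    then show ?thesis by (auto simp: f_def g_def mem_Times_iff)
  qed
  have f0: "f 0 = 0" "g 0 = 0" "f 1 = 1" "g 1 = 1" using assms(3,4) by (simp_all add: f_def g_def)
  have ucf: "uniformly_continuous_on {0..1} f"
    by (rule compact_uniformly_continuous[OF _ compact_Icc]) (unfold f_def, intro continuous_intros assms(1))
  have ucg: "uniformly_continuous_on {0..1} g"
    by (rule compact_uniformly_continuous[OF _ compact_Icc]) (unfold g_def, intro continuous_intros assms(1))
  define C where "C = {x::nat\<Rightarrow>real. \<forall>j<Suc n. 0 \<le> x j \<and> x j \<le> 1}"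
  have ttC: "tt n x k \<in> {0..1}" if "x \<in> C" for x :: "nat \<Rightarrow> real" and k
    using that by (auto simp: tt_def C_def)
  define D where "D x k = f (tt n x k) - g (tt n x (k - 1))" for x k
  define F where "F i x = D x (i+1) - D x (i+2)" for i x
  have "\<exists>x\<in>C. \<forall>i<Suc n. F i x = 0"
    unfolding C_def
  proof (rule poincare_miranda)
    fix e :: real assume e: "e > 0"
    then have e4: "e/4 > 0" by simp
    obtain d1 where d1: "d1 > 0" "\<forall>s\<in>{0..1}. \<forall>s'\<in>{0..1}. dist s' s < d1 \<longrightarrow> dist (f s') (f s) < e/4"
      using ucf[unfolded uniformly_continuous_on_def, rule_format, OF e4] by blast
    obtain d2 where d2: "d2 > 0" "\<forall>s\<in>{0..1}. \<forall>s'\<in>{0..1}. dist s' s < d2 \<longrightarrow> dist (g s') (g s) < e/4"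
      using ucg[unfolded uniformly_continuous_on_def, rule_format, OF e4] by blast
    show "\<exists>d>0. \<forall>x\<in>{x. \<forall>j<Suc n. 0 \<le> x j \<and> x j \<le> 1}. \<forall>y\<in>{x. \<forall>j<Suc n. 0 \<le> x j \<and> x j \<le> 1}.
            (\<forall>j<Suc n. \<bar>x j - y j\<bar> < d) \<longrightarrow> (\<forall>i<Suc n. \<bar>F i x - F i y\<bar> < e)"
    proof (rule exI[of _ "min d1 d2"], intro conjI ballI impI allI)
      show "min d1 d2 > 0" using d1 d2 by simp
      fix x y i
      assume x: "x \<in> {x. \<forall>j<Suc n. 0 \<le> x j \<and> x j \<le> 1}" and y: "y \<in> {x. \<forall>j<Suc n. 0 \<le> x j \<and> x j \<le> 1}"
        and cl: "\<forall>j<Suc n. \<bar>x j - y j\<bar> < min d1 d2" and i: "i < Suc n"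
      have tcl: "\<bar>tt n x k - tt n y k\<bar> < min d1 d2" for k
        using cl d1 d2 by (auto simp: tt_def)
      have xin: "tt n x k \<in> {0..1}" "tt n y k \<in> {0..1}" for k
        using ttC x y by (auto simp: C_def)
      have Dcl: "\<bar>D x k - D y k\<bar> < e/2" for k
      proof -
        have "\<bar>f (tt n x k) - f (tt n y k)\<bar> < e/4"
          using d1(2) xin tcl[of k] by (auto simp: dist_real_def)
        moreover have "\<bar>g (tt n x (k-1)) - g (tt n y (k-1))\<bar> < e/4"
          using d2(2) xin tcl[of "k-1"] by (auto simp: dist_real_def)
        ultimately show ?thesis unfolding D_def by arith
      qed
      show "\<bar>F i x - F i y\<bar> < e"
        using Dcl[of "i+1"] Dcl[of "i+2"] unfolding F_def by arith
    qed
  next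
    fix x :: "nat \<Rightarrow> real" and i assume x: "x \<in> {x. \<forall>j<Suc n. 0 \<le> x j \<and> x j \<le> 1}" and i: "i < Suc n" and xi: "x i = 0"
    have "tt n x (i+1) = 0" using i xi by (simp add: tt_def)
    moreover have "tt n x i \<in> {0..1}" "tt n x (i+2) \<in> {0..1}" using ttC x by (auto simp: C_def)
    ultimately show "F i x \<le> 0"
      using fg01[of "tt n x i"] fg01[of "tt n x (i+2)"] f0 by (simp add: F_def D_def)
  next
    fix x :: "nat \<Rightarrow> real" and i assume x: "x \<in> {x. \<forall>j<Suc n. 0 \<le> x j \<and> x j \<le> 1}" and i: "i < Suc n" and xi: "x i = 1"
    have "tt n x (i+1) = 1" using i xi by (simp add: tt_def)
    moreover have "tt n x i \<in> {0..1}" "tt n x (i+2) \<in> {0..1}" using ttC x by (auto simp: C_def)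
    ultimately show "F i x \<ge> 0"
      using fg01[of "tt n x i"] fg01[of "tt n x (i+2)"] f0 by (simp add: F_def D_def)
  qed
  then obtain x where xC: "x \<in> C" and Fx: "\<forall>i<Suc n. F i x = 0" by blast
  define t where "t k = tt n x k" for k
  have t01: "t k \<in> {0..1}" for k using ttC[OF xC] by (simp add: t_def)
  have t0: "t 0 = 0" and tN: "t (Suc (Suc n)) = 1" by (simp_all add: t_def tt_def)
  have Deq: "D x (Suc k) = D x (Suc 0)" if "k \<le> Suc n" for k
    using that
  proof (induction k)
    case 0 then show ?case by simp
  next
    case (Suc k)
    then have "F k x = 0" using Fx by simp
    then show ?case using Suc by (simp add: F_def)
  qed
  define c where "c = f (t 1)"
  have chain: "f (t (Suc k)) = g (t k) + c" if "k \<le> Suc n" for k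
    using Deq[OF that] t0 f0 by (simp add: D_def c_def t_def)
  define A where "A i = (if i < 0 then \<gamma> (t (Suc n)) - (1,1) else \<gamma> (t (nat i)))" for i :: int
  have P1: "A 0 = (0, 0)" using t0 assms(3) by (simp add: A_def)
  have P2: "A (int n + 2) = (1, 1)"
  proof -
    have "nat (int n + 2) = Suc (Suc n)" by simp
    then show ?thesis using tN assms(4) by (simp add: A_def)
  qed
  have P3: "A (-1) = A (int n + 1) - (1, 1)"
  proof -
    have "nat (int n + 1) = Suc n" by simp
    then show ?thesis by (simp add: A_def)
  qed
  have P4: "\<forall>i\<in>{1..int n + 1}. A i \<in> \<gamma> ` {0..1}"
    using t01 by (auto simp: A_def)
  have P5: "\<forall>i\<in>{0..int n + 1}. snd (A (i + 1) - A i) = fst (A i - A (i - 1))"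
  proof
    fix i assume i: "i \<in> {0..int n + 1}"
    then obtain k where k: "i = int k" "k \<le> Suc n" by (metis atLeastAtMost_iff nonneg_int_cases of_nat_le_iff of_nat_Suc add.commute)
    have a1: "A (i + 1) = \<gamma> (t (Suc k))"
    proof -
      have "nat (int k + 1) = Suc k" by simp
      then show ?thesis using k by (simp add: A_def)
    qed
    have a0: "A i = \<gamma> (t k)" using k by (simp add: A_def)
    show "snd (A (i + 1) - A i) = fst (A i - A (i - 1))"
    proof (cases k)
      case 0
      then have "A (i - 1) = \<gamma> (t (Suc n)) - (1,1)" using k by (simp add: A_def)
      moreover have "f (t (Suc (Suc n))) = g (t (Suc n)) + c" using chain[of "Suc n"] by simp
      ultimately show ?thesis using a1 a0 0 t0 tN f0 chain[of 0]
        by (simp add: f_def g_def c_def)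
    next
      case (Suc k')
      then have "A (i - 1) = \<gamma> (t k')" using k by (simp add: A_def)
      moreover have "f (t (Suc k)) = g (t k) + c" "f (t (Suc k')) = g (t k') + c"
        using chain k Suc by auto
      ultimately show ?thesis using a1 a0 Suc
        by (simp add: f_def g_def)
    qed
  qed
  have part2: "inj_on A {0..int n + 2}" if Dl: "\<forall>s\<in>{0<..<1}. \<gamma> s \<in> Delta"
  proof -
    have below: "f s \<le> g s" if "s \<in> {0..1}" for s
    proof -
      have "s = 0 \<or> s = 1 \<or> s \<in> {0<..<1}" using that by (auto simp: less_le)
      then consider "s = 0" | "s = 1" | "s \<in> {0<..<1}" by blast
      then show ?thesis
      proof cases
        case 3 then have "\<gamma> s \<in> Delta" using Dl by blast
        then show ?thesis by (auto simp: Delta_def f_def g_def split: prod.splits)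
      qed (use f0 in auto)
    qed
    have zero: "g s = 0" if "s \<in> {0..1}" "f s = 0" for s
    proof -
      have "s = 0 \<or> s = 1 \<or> s \<in> {0<..<1}" using that(1) by (auto simp: less_le)
      then consider "s = 0" | "s = 1" | "s \<in> {0<..<1}" by blast
      then show ?thesis
      proof cases
        case 3 then have "\<gamma> s \<in> Delta" using Dl by blast
        then show ?thesis using that(2) by (auto simp: Delta_def f_def g_def split: prod.splits)
      qed (use f0 that(2) in auto)
    qed
    have cpos: "c > 0"
    proof (rule ccontr)
      assume "\<not> c > 0"
      moreover have "c \<ge> 0" using fg01[OF t01[of 1]] by (simp add: c_def)
      ultimately have c0: "c = 0" by simp
      have "g (t k) = 0" if "k \<le> Suc n" for k
        using that
      proof (induction k)
        case 0 then show ?case using t0 f0 by simp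
      next
        case (Suc k)
        then have "f (t (Suc k)) = 0" using chain[of k] c0 by simp
        then show ?case using zero t01 by blast
      qed
      then have "g (t (Suc n)) = 0" by simp
      then show False using chain[of "Suc n"] c0 tN f0 by simp
    qed
    have step: "g (t k) < g (t (Suc k))" if "k \<le> Suc n" for k
      using chain[OF that] below[OF t01[of "Suc k"]] cpos by simp
    have strict: "g (t j) < g (t k)" if "j < k" "k \<le> Suc (Suc n)" for j k
      using that
    proof (induction k)
      case 0 then show ?case by simp
    next
      case (Suc k)
      show ?case
      proof (cases "j = k")
        case True then show ?thesis using step Suc by simp
      next
        case False
        then have "g (t j) < g (t k)" using Suc by simp
        then show ?thesis using step[of k] Suc by simp
      qed
    qed
    show ?thesis
    proof (rule inj_onI)
      fix i i' assume i: "i \<in> {0..int n + 2}" and i': "i' \<in> {0..int n + 2}" and eq: "A i = A i'"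
      obtain k where k: "i = int k" using i by (metis atLeastAtMost_iff nonneg_int_cases)
      obtain k' where k': "i' = int k'" using i' by (metis atLeastAtMost_iff nonneg_int_cases)
      have kk: "k \<le> Suc (Suc n)" "k' \<le> Suc (Suc n)" using i i' k k' by auto
      have "\<gamma> (t k) = \<gamma> (t k')" using eq k k' by (simp add: A_def)
      then have "g (t k) = g (t k')" by (simp add: g_def)
      then have "k = k'" using strict[of k k'] strict[of k' k] kk by (metis less_irrefl nat_neq_iff)
      then show "i = i'" using k k' by simp
    qed
  qed
  show ?thesis
    using P1 P2 P3 P4 P5 part2 by blast
qed

end
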